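(* Let $(\Omega,\mathcal{H},\mathbb{P})$ be a probability space with a filtration $\mathbb{U}=(\mathcal{U}_t)_{t\ge0}$, and let $(D_t)_{t\ge0}$ be a continuous $\mathbb{U}$-adapted real process (the income of an energy-efficient building) such that all conditional expectations below are well defined and finite. Let $R>0$, $\bar r>0$, $\alpha>\alpha^\star>0$, let $\mathfrak{c}:(\mathbb{R}_+)^2\to\mathbb{R}_+^*$ be continuous, let $\mathfrak{p}$ be a fixed energy source and $\mathfrak{f}(\cdot,\mathfrak{p}):\mathbb{R}_+\to\mathbb{R}_+^*$ differentiable, and let $\delta:\mathbb{R}_+\to\mathbb{R}_+$ be a deterministic $\mathcal{C}^1$ function for which there exist $0\le t_\circ<t_\star$ with $\delta$ constant on $[0,t_\circ]$ and constant on $[t_\star,\infty)$. Define $$C_t:=R\,\mathbb{E}\Big[\int_t^{\infty}e^{-\bar r(u-t)}D_u\,\mathrm{d}u\,\Big|\,\mathcal{U}_t\Big],$$ $$\mathcal{C}_{t,\delta}:=R\operatorname*{ess\,sup}_{\theta\ge t}\mathbb{E}\Big[\int_t^{\theta}\big[D_u-(\alpha-\alpha^\star)\mathfrak{f}(\delta_u,\mathfrak{p})\big]e^{-\bar r(u-t)}\mathrm{d}u-\mathfrak{c}(\alpha,\alpha^\star)e^{-\bar r(\theta-t)}+\int_\theta^\infty e^{-\bar r(u-t)}D_u\,\mathrm{d}u\,\Big|\,\mathcal{U}_t\Big],$$ the essential supremum being over (deterministic) times $\theta\in[t,\infty)$. Assume that (1) $\delta$ is non-decreasing on $\mathbb{R}_+$,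 and (2) $\mathfrak{f}(\cdot,\mathfrak{p})$ is non-decreasing on $\mathbb{R}_+$. Then for every $t\ge0$, $$\mathcal{C}_{t,\delta}=C_t-R\,X_{t,\delta},\qquad X_{t,\delta}:=\mathfrak{c}(\alpha,\alpha^\star)e^{-\bar r(\mathfrak{t}-t)}+(\alpha-\alpha^\star)\int_t^{\mathfrak{t}}\mathfrak{f}(\delta_u,\mathfrak{p})e^{-\bar r(u-t)}\,\mathrm{d}u,$$ where the optimal renovation date $\mathfrak{t}\in[t,+\infty]$ is given by: $\mathfrak{t}=t$ if $\mathfrak{f}(\delta_\theta,\mathfrak{p})-\bar r\frac{\mathfrak{c}(\alpha,\alpha^\star)}{\alpha-\alpha^\star}>0$ for all $\theta\in[t,\infty)$; $\mathfrak{t}=+\infty$ if $\mathfrak{f}(\delta_\theta,\mathfrak{p})-\bar r\frac{\mathfrak{c}(\alpha,\alpha^\star)}{\alpha-\alpha^\star}<0$ for all $\theta\in[t,\infty)$; and $\mathfrak{t}=\theta^\star$ where $\theta^\star$ is the unique solution in $[t,\infty)$ of $\mathfrak{f}(\delta_\theta,\mathfrak{p})=\bar r\frac{\mathfrak{c}(\alpha,\alpha^\star)}{\alpha-\alpha^\star}$ (when such a unique solution exists). For $\mathfrak{t}=+\infty$, $e^{-\bar r(\mathfrak{t}-t)}:=0$ and the integral is over $[t,\infty)$.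
   Context: $\delta_t$ is the (deterministic) carbon price at time $t$, $\mathfrak{f}(\delta,\mathfrak{p})$ the energy price of source $\mathfrak{p}$ at carbon price $\delta$, $\alpha$ and $\alpha^\star$ the energy consumption per square meter of the building and of an efficient building, $\mathfrak{c}(\alpha,\alpha^\star)$ the renovation cost, $R$ the surface and $\bar r$ the discount rate. *)

theory Defs
  imports "HOL-Probability.Probability"
begin

definition is_ess_sup_fam :: "'a measure \<Rightarrow> ('a \<Rightarrow> real) set \<Rightarrow> ('a \<Rightarrow> real) \<Rightarrow> bool" where
  "is_ess_sup_fam M S Z \<longleftrightarrow>
     Z \<in> borel_measurable M \<and>
     (\<forall>X\<in>S. AE \<omega> in M. X \<omega> \<le> Z \<omega>) \<and>
     (\<forall>Z'\<in>borel_measurable M. (\<forall>X\<in>S. AE \<omega> in M. X \<omega> \<le> Z' \<omega>) \<longrightarrow> (AE \<omega> in M. Z \<omega> \<le> Z' \<omega>))"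

definition value_C :: "'a measure \<Rightarrow> (real \<Rightarrow> 'a measure) \<Rightarrow> (real \<Rightarrow> 'a \<Rightarrow> real) \<Rightarrow> real \<Rightarrow> real \<Rightarrow> real \<Rightarrow> 'a \<Rightarrow> real" where
  "value_C M F D R r t = (\<lambda>\<omega>. R * real_cond_exp M (F t)
      (\<lambda>\<omega>'. LBINT u:{t..}. exp (- r * (u - t)) * D u \<omega>') \<omega>)"

text \<open>The conditional expectation inside the essential supremum, for a renovation at the
  deterministic time theta; fp is u \<mapsto> f(delta_u, p), c0 = c(alpha, alpha*).\<close>
definition renov_payoff :: "'a measure \<Rightarrow> (real \<Rightarrow> 'a measure) \<Rightarrow> (real \<Rightarrow> 'a \<Rightarrow> real) \<Rightarrow> real \<Rightarrow> real
     \<Rightarrow> (real \<Rightarrow> real) \<Rightarrow> real \<Rightarrow> real \<Rightarrow> real \<Rightarrow> 'a \<Rightarrow> real" where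
  "renov_payoff M F D r a fp c0 t \<theta> = real_cond_exp M (F t)
      (\<lambda>\<omega>. (LBINT u:{t..\<theta>}. (D u \<omega> - a * fp u) * exp (- r * (u - t)))
            - c0 * exp (- r * (\<theta> - t))
            + (LBINT u:{\<theta>..}. exp (- r * (u - t)) * D u \<omega>))"

end

theory Submission
  imports Defs "HOL-Real_Asymp.Real_Asymp"
begin


lemma exp_int_lborel:
  fixes r t B :: real
  assumes r: "r > 0"
  shows "set_integrable lborel {t..} (\<lambda>u. B * exp (- r * (u - t)))"
proof -
  have "(\<lambda>x. exp (- r * x)) integrable_on {t..}"
    using integrable_on_exp_minus_to_infinity[OF r] by simp
  then have "(\<lambda>x. (\<bar>B\<bar> * exp (r*t)) * exp (- r * x)) integrable_on {t..}"
    by (rule integrable_on_mult_right) 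
  then have "(\<lambda>u. \<bar>B\<bar> * exp (- r * (u - t))) integrable_on {t..}"
    by (simp add: algebra_simps mult_exp_exp)
  then have "(\<lambda>u. \<bar>B\<bar> * exp (- r * (u - t))) absolutely_integrable_on {t..}"
    by (intro nonnegative_absolutely_integrable_1) auto
  then have i: "integrable lborel (\<lambda>u. indicator {t..} u *\<^sub>R (\<bar>B\<bar> * exp (- r * (u - t))))"
    unfolding set_integrable_def
    by (subst (asm) integrable_completion) (auto intro!: borel_measurable_continuous_on_indicator continuous_intros)
  show ?thesis unfolding set_integrable_def
    by (rule Bochner_Integration.integrable_bound[OF i])
       (auto intro!: borel_measurable_continuous_on_indicator continuous_intros split: split_indicator simp: abs_mult)
qed

lemma Xfin_diff:
  fixes fp :: "real \<Rightarrow> real" and a r c0 t \<theta> \<theta>' :: real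
  assumes cont: "continuous_on {t..} fp" and le: "t \<le> \<theta>'" "\<theta>' \<le> \<theta>"
  shows "((\<lambda>u. (a * fp u - r * c0) * exp (- r * (u - t))) has_integral
      ((c0 * exp (- r * (\<theta> - t)) + a * (LBINT u:{t..\<theta>}. fp u * exp (- r * (u - t))))
     - (c0 * exp (- r * (\<theta>' - t)) + a * (LBINT u:{t..\<theta>'}. fp u * exp (- r * (u - t)))))) {\<theta>'..\<theta>}"
proof -
  define h where "h u = fp u * exp (- r * (u - t))" for u
  have ch: "continuous_on {t..} h" unfolding h_def
    by (intro continuous_intros cont)
  have eq: "(LBINT u:{t..T}. fp u * exp (- r * (u - t))) = integral {t..T} h" for T
  proof -
    have "continuous_on {t..T} h" using ch by (rule continuous_on_subset) auto
    then have "set_integrable lborel {t..T} h" unfolding set_integrable_def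
      by (intro borel_integrable_compact) auto
    then show ?thesis unfolding h_def[abs_def] by (rule set_borel_integral_eq_integral(2))
  qed
  have hi: "h integrable_on {t..\<theta>}"
    by (rule integrable_continuous_interval, rule continuous_on_subset[OF ch]) auto
  have comb: "integral {t..\<theta>'} h + integral {\<theta>'..\<theta>} h = integral {t..\<theta>} h"
    by (rule Henstock_Kurzweil_Integration.integral_combine[OF le hi])
  have hi2: "h integrable_on {\<theta>'..\<theta>}"
    by (rule integrable_continuous_interval, rule continuous_on_subset[OF ch]) (use le in auto)
  have i1: "((\<lambda>u. a * h u) has_integral (a * integral {\<theta>'..\<theta>} h)) {\<theta>'..\<theta>}"
    by (rule has_integral_mult_right) (use hi2 in auto)
  have "((\<lambda>u. - r * exp (- r * (u - t))) has_integral (exp (- r * (\<theta> - t)) - exp (- r * (\<theta>' - t)))) {\<theta>'..\<theta>}"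
    by (rule fundamental_theorem_of_calculus[OF le(2)])
       (auto simp: has_real_derivative_iff_has_vector_derivative[symmetric] intro!: derivative_eq_intros)
  then have i2: "((\<lambda>u. c0 * (- r * exp (- r * (u - t)))) has_integral (c0 * (exp (- r * (\<theta> - t)) - exp (- r * (\<theta>' - t))))) {\<theta>'..\<theta>}"
    by (rule has_integral_mult_right)
  have "((\<lambda>u. a * h u + c0 * (- r * exp (- r * (u - t)))) has_integral
     (a * integral {\<theta>'..\<theta>} h + c0 * (exp (- r * (\<theta> - t)) - exp (- r * (\<theta>' - t))))) {\<theta>'..\<theta>}"
    by (rule has_integral_add[OF i1 i2])
  moreover have "(\<lambda>u. a * h u + c0 * (- r * exp (- r * (u - t)))) = (\<lambda>u. (a * fp u - r * c0) * exp (- r * (u - t)))"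
    by (auto simp: h_def algebra_simps)
  moreover have "a * integral {\<theta>'..\<theta>} h + c0 * (exp (- r * (\<theta> - t)) - exp (- r * (\<theta>' - t))) =
      (c0 * exp (- r * (\<theta> - t)) + a * integral {t..\<theta>} h) - (c0 * exp (- r * (\<theta>' - t)) + a * integral {t..\<theta>'} h)"
    using comb[symmetric] by (simp add: algebra_simps)
  ultimately show ?thesis unfolding eq by simp
qed

lemma Xfin_up:
  fixes fp :: "real \<Rightarrow> real" and a r c0 t \<theta> \<theta>' :: real
  assumes cont: "continuous_on {t..} fp" and le: "t \<le> \<theta>'" "\<theta>' \<le> \<theta>"
    and a: "a > 0" and K: "\<And>u. u \<in> {\<theta>'..\<theta>} \<Longrightarrow> r * c0 / a \<le> fp u"
  shows "c0 * exp (- r * (\<theta>' - t)) + a * (LBINT u:{t..\<theta>'}. fp u * exp (- r * (u - t)))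
     \<le> c0 * exp (- r * (\<theta> - t)) + a * (LBINT u:{t..\<theta>}. fp u * exp (- r * (u - t)))"
proof -
  have "0 \<le> (c0 * exp (- r * (\<theta> - t)) + a * (LBINT u:{t..\<theta>}. fp u * exp (- r * (u - t))))
     - (c0 * exp (- r * (\<theta>' - t)) + a * (LBINT u:{t..\<theta>'}. fp u * exp (- r * (u - t))))"
  proof (rule has_integral_nonneg[OF Xfin_diff[OF cont le]])
    fix u assume u: "u \<in> {\<theta>'..\<theta>}"
    have "r * c0 \<le> a * fp u" using K[OF u] a by (simp add: field_simps)
    then show "0 \<le> (a * fp u - r * c0) * exp (- r * (u - t))" by simp
  qed
  then show ?thesis by simp
qed

lemma Xfin_down:
  fixes fp :: "real \<Rightarrow> real" and a r c0 t \<theta> \<theta>' :: real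
  assumes cont: "continuous_on {t..} fp" and le: "t \<le> \<theta>'" "\<theta>' \<le> \<theta>"
    and a: "a > 0" and K: "\<And>u. u \<in> {\<theta>'..\<theta>} \<Longrightarrow> fp u \<le> r * c0 / a"
  shows "c0 * exp (- r * (\<theta> - t)) + a * (LBINT u:{t..\<theta>}. fp u * exp (- r * (u - t)))
     \<le> c0 * exp (- r * (\<theta>' - t)) + a * (LBINT u:{t..\<theta>'}. fp u * exp (- r * (u - t)))"
proof -
  have "0 \<le> - ((c0 * exp (- r * (\<theta> - t)) + a * (LBINT u:{t..\<theta>}. fp u * exp (- r * (u - t))))
     - (c0 * exp (- r * (\<theta>' - t)) + a * (LBINT u:{t..\<theta>'}. fp u * exp (- r * (u - t)))))"
  proof (rule has_integral_nonneg[OF has_integral_neg[OF Xfin_diff[OF cont le]]])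
    fix u assume u: "u \<in> {\<theta>'..\<theta>}"
    have "a * fp u \<le> r * c0" using K[OF u] a by (simp add: field_simps)
    then show "0 \<le> - ((a * fp u - r * c0) * exp (- r * (u - t)))"
      by (simp add: mult_nonpos_nonneg)
  qed
  then show ?thesis by simp
qed

lemma ess_sup_char:
  fixes M :: "'a measure" and P :: "real \<Rightarrow> 'a \<Rightarrow> real" and \<theta>n :: "nat \<Rightarrow> real"
  assumes CE: "CE \<in> borel_measurable M"
    and P: "\<And>\<theta>. \<theta> \<ge> t \<Longrightarrow> AE \<omega> in M. P \<theta> \<omega> = CE \<omega> - g \<theta>"
    and lb: "\<And>\<theta>. \<theta> \<ge> t \<Longrightarrow> m \<le> g \<theta>"
    and seq: "\<And>n. \<theta>n n \<ge> t" and lim: "(\<lambda>n. g (\<theta>n n)) \<longlonglongrightarrow> m"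
  shows "is_ess_sup_fam M {P \<theta> | \<theta>. \<theta> \<ge> t} (\<lambda>\<omega>. CE \<omega> - m) \<and>
     (\<forall>Z. is_ess_sup_fam M {P \<theta> | \<theta>. \<theta> \<ge> t} Z \<longrightarrow> (AE \<omega> in M. Z \<omega> = CE \<omega> - m))"
proof -
  let ?S = "{P \<theta> | \<theta>. \<theta> \<ge> t}"
  have up: "\<forall>X\<in>?S. AE \<omega> in M. X \<omega> \<le> CE \<omega> - m"
  proof
    fix X assume "X \<in> ?S"
    then obtain \<theta> where X: "X = P \<theta>" "\<theta> \<ge> t" by blast
    from P[OF X(2)] show "AE \<omega> in M. X \<omega> \<le> CE \<omega> - m"
    proof eventually_elim
      case (elim \<omega>)
      then show ?case using lb[OF X(2)] X(1) by simp
    qed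
  qed
  have least: "AE \<omega> in M. CE \<omega> - m \<le> Z' \<omega>" if Z': "\<forall>X\<in>?S. AE \<omega> in M. X \<omega> \<le> Z' \<omega>" for Z'
  proof -
    have "AE \<omega> in M. CE \<omega> - g (\<theta>n n) \<le> Z' \<omega>" for n
    proof -
      have a: "AE \<omega> in M. P (\<theta>n n) \<omega> \<le> Z' \<omega>" using Z' seq[of n] by blast
      from a P[OF seq[of n]] show ?thesis by eventually_elim simp
    qed
    then have "AE \<omega> in M. \<forall>n. CE \<omega> - g (\<theta>n n) \<le> Z' \<omega>" by (simp add: AE_all_countable)
    then show ?thesis
    proof eventually_elim
      case (elim \<omega>)
      have "(\<lambda>n. CE \<omega> - g (\<theta>n n)) \<longlonglongrightarrow> CE \<omega> - m" by (intro tendsto_intros lim)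
      then show ?case by (rule LIMSEQ_le_const2) (use elim in auto)
    qed
  qed
  have ess: "is_ess_sup_fam M ?S (\<lambda>\<omega>. CE \<omega> - m)"
    unfolding is_ess_sup_fam_def using CE up least by auto
  moreover have "AE \<omega> in M. Z \<omega> = CE \<omega> - m" if Z: "is_ess_sup_fam M ?S Z" for Z
  proof -
    have 1: "AE \<omega> in M. Z \<omega> \<le> CE \<omega> - m"
      using Z CE up unfolding is_ess_sup_fam_def by auto
    have 2: "AE \<omega> in M. CE \<omega> - m \<le> Z \<omega>"
      using Z least unfolding is_ess_sup_fam_def by auto
    from 1 2 show ?thesis by eventually_elim simp
  qed
  ultimately show ?thesis by blast
qed

lemma payoff_ae:
  fixes M :: "'a measure" and F :: "real \<Rightarrow> 'a measure" and D :: "real \<Rightarrow> 'a \<Rightarrow> real"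
  assumes prob: "prob_space M" and subalg: "subalgebra M (F t)"
   and path: "\<And>\<omega>. \<omega> \<in> space M \<Longrightarrow> set_integrable lborel {t..} (\<lambda>u. exp (- r * (u - t)) * D u \<omega>)"
   and Yint: "integrable M (\<lambda>\<omega>. LBINT u:{t..}. exp (- r * (u - t)) * D u \<omega>)"
   and hint: "set_integrable lborel {t..\<theta>} (\<lambda>u. fp u * exp (- r * (u - t)))"
   and \<theta>: "t \<le> \<theta>"
  shows "AE \<omega> in M. renov_payoff M F D r a fp c0 t \<theta> \<omega> =
     real_cond_exp M (F t) (\<lambda>\<omega>. LBINT u:{t..}. exp (- r * (u - t)) * D u \<omega>) \<omega>
     - (c0 * exp (- r * (\<theta> - t)) + a * (LBINT u:{t..\<theta>}. fp u * exp (- r * (u - t))))"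
proof -
  interpret prob_space M by (rule prob)
  interpret finite_measure_subalgebra M "F t" by unfold_locales (rule subalg)
  define Y where "Y \<omega> = (LBINT u:{t..}. exp (- r * (u - t)) * D u \<omega>)" for \<omega>
  define k where "k = c0 * exp (- r * (\<theta> - t)) + a * (LBINT u:{t..\<theta>}. fp u * exp (- r * (u - t)))"
  define G where "G \<omega> = (LBINT u:{t..\<theta>}. (D u \<omega> - a * fp u) * exp (- r * (u - t)))
            - c0 * exp (- r * (\<theta> - t))
            + (LBINT u:{\<theta>..}. exp (- r * (u - t)) * D u \<omega>)" for \<omega>
  have pw: "G \<omega> = Y \<omega> - k" if \<omega>: "\<omega> \<in> space M" for \<omega>
  proof -
    have i1: "set_integrable lborel {t..\<theta>} (\<lambda>u. exp (- r * (u - t)) * D u \<omega>)"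
      by (rule set_integrable_subset[OF path[OF \<omega>]]) auto
    have i2: "set_integrable lborel {\<theta>..} (\<lambda>u. exp (- r * (u - t)) * D u \<omega>)"
      by (rule set_integrable_subset[OF path[OF \<omega>]]) (use \<theta> in auto)
    have "(LBINT u:{t..\<theta>}. (D u \<omega> - a * fp u) * exp (- r * (u - t)))
        = (LBINT u:{t..\<theta>}. exp (- r * (u - t)) * D u \<omega> - a * (fp u * exp (- r * (u - t))))"
      by (simp add: algebra_simps)
    also have "\<dots> = (LBINT u:{t..\<theta>}. exp (- r * (u - t)) * D u \<omega>) - a * (LBINT u:{t..\<theta>}. fp u * exp (- r * (u - t)))"
      using i1 hint by (simp add: set_integral_diff set_integral_mult_right set_integrable_mult_right)
    finally have e1: "(LBINT u:{t..\<theta>}. (D u \<omega> - a * fp u) * exp (- r * (u - t))) = \<dots>" .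
    have "{t..} = {t..\<theta>} \<union> {\<theta>..}" using \<theta> by auto
    then have "Y \<omega> = (LBINT u:{t..\<theta>} \<union> {\<theta>..}. exp (- r * (u - t)) * D u \<omega>)" unfolding Y_def by simp
    also have "\<dots> = (LBINT u:{t..\<theta>}. exp (- r * (u - t)) * D u \<omega>) + (LBINT u:{\<theta>..}. exp (- r * (u - t)) * D u \<omega>)"
    proof (rule set_integral_Un_AE[OF _ _ _ i1 i2])
      show "AE x in lborel. \<not> (x \<in> {t..\<theta>} \<and> x \<in> {\<theta>..})"
        using AE_lborel_singleton[of \<theta>] by eventually_elim auto
    qed auto
    finally show ?thesis unfolding G_def k_def e1 by simp
  qed
  have Ym: "Y \<in> borel_measurable M" using Yint unfolding Y_def[abs_def] by (rule borel_measurable_integrable)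
  have Gm: "G \<in> borel_measurable M"
    using Ym by (subst measurable_cong[OF pw]) auto
  have "AE \<omega> in M. real_cond_exp M (F t) G \<omega> = real_cond_exp M (F t) (\<lambda>\<omega>. Y \<omega> - k) \<omega>"
    by (rule real_cond_exp_cong) (use pw Gm Ym in auto)
  moreover have "AE \<omega> in M. real_cond_exp M (F t) (\<lambda>\<omega>. Y \<omega> - k) \<omega> = real_cond_exp M (F t) Y \<omega> - real_cond_exp M (F t) (\<lambda>_. k) \<omega>"
    by (rule real_cond_exp_diff) (use Yint in \<open>auto simp: Y_def[abs_def]\<close>)
  moreover have "AE \<omega> in M. real_cond_exp M (F t) (\<lambda>_. k) \<omega> = k"
    by (rule real_cond_exp_F_meas) auto
  ultimately show ?thesis
    unfolding renov_payoff_def G_def[symmetric, abs_def] Y_def[symmetric, abs_def] k_def[symmetric]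
    by eventually_elim simp
qed

lemma lim_int:
  fixes h :: "real \<Rightarrow> real"
  assumes hint: "set_integrable lborel {t..} h"
  shows "(\<lambda>n. LBINT u:{t..\<theta> + real n}. h u) \<longlonglongrightarrow> (LBINT u:{t..}. h u)"
  unfolding set_lebesgue_integral_def
proof (rule integral_dominated_convergence[where w="\<lambda>u. norm (indicator {t..} u *\<^sub>R h u)"])
  show "(\<lambda>u. indicat_real {t..} u *\<^sub>R h u) \<in> borel_measurable lborel"
    using hint unfolding set_integrable_def by (rule borel_measurable_integrable)
  show "(\<lambda>u. indicat_real {t..\<theta> + real n} u *\<^sub>R h u) \<in> borel_measurable lborel" for n
    using set_integrable_subset[OF hint, of "{t..\<theta> + real n}"] unfolding set_integrable_def
    by (intro borel_measurable_integrable) auto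
  show "integrable lborel (\<lambda>u. norm (indicator {t..} u *\<^sub>R h u))"
    using hint unfolding set_integrable_def by (rule integrable_norm)
  show "AE u in lborel. (\<lambda>n. indicat_real {t..\<theta> + real n} u *\<^sub>R h u) \<longlonglongrightarrow> indicat_real {t..} u *\<^sub>R h u"
  proof (rule AE_I2)
    fix u :: real
    obtain N :: nat where N: "u - \<theta> < real N" using reals_Archimedean2 by blast
    have "eventually (\<lambda>n. indicat_real {t..\<theta> + real n} u *\<^sub>R h u = indicat_real {t..} u *\<^sub>R h u) sequentially"
      unfolding eventually_sequentially
    proof (intro exI allI impI)
      fix n assume "N \<le> n"
      then have "real N \<le> real n" by simp
      then show "indicat_real {t..\<theta> + real n} u *\<^sub>R h u = indicat_real {t..} u *\<^sub>R h u"
        using N by (auto split: split_indicator)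
    qed
    then show "(\<lambda>n. indicat_real {t..\<theta> + real n} u *\<^sub>R h u) \<longlonglongrightarrow> indicat_real {t..} u *\<^sub>R h u"
      by (rule tendsto_eventually)
  qed
  show "AE u in lborel. norm (indicat_real {t..\<theta> + real n} u *\<^sub>R h u) \<le> norm (indicator {t..} u *\<^sub>R h u)" for n
    by (auto split: split_indicator)
qed

lemma exp_lim:
  fixes r :: real assumes "r > 0"
  shows "(\<lambda>n::nat. exp (- r * (\<theta> + real n - t))) \<longlonglongrightarrow> 0"
  using assms by real_asymp


theorem theorem1:
  fixes M :: "'a measure" and F :: "real \<Rightarrow> 'a measure"
    and D :: "real \<Rightarrow> 'a \<Rightarrow> real"
    and R rbar \<alpha> \<alpha>s :: real
    and c :: "real \<Rightarrow> real \<Rightarrow> real"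
    and f :: "real \<Rightarrow> 'e \<Rightarrow> real" and p :: 'e
    and \<delta> :: "real \<Rightarrow> real"
  assumes prob: "prob_space M"
    and filt: "filtration (space M) F"
    and subalg: "\<And>t. subalgebra M (F t)"
    and D_adapted: "\<And>t. t \<ge> 0 \<Longrightarrow> D t \<in> borel_measurable (F t)"
    and D_cont: "\<And>\<omega>. \<omega> \<in> space M \<Longrightarrow> continuous_on {0..} (\<lambda>u. D u \<omega>)"
    and D_int_path: "\<And>\<omega> t. \<omega> \<in> space M \<Longrightarrow> t \<ge> 0 \<Longrightarrow>
                        set_integrable lborel {t..} (\<lambda>u. exp (- rbar * (u - t)) * D u \<omega>)"
    and D_int: "\<And>t. t \<ge> 0 \<Longrightarrow>
                   integrable M (\<lambda>\<omega>. LBINT u:{t..}. exp (- rbar * (u - t)) * D u \<omega>)"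
    and R_pos: "R > 0" and r_pos: "rbar > 0"
    and alpha: "\<alpha> > \<alpha>s" "\<alpha>s > 0"
    and c_cont: "continuous_on ({0..} \<times> {0..}) (\<lambda>(x, y). c x y)"
    and c_pos: "\<And>x y. x \<ge> 0 \<Longrightarrow> y \<ge> 0 \<Longrightarrow> c x y > 0"
    and f_diff: "\<And>x. x \<ge> 0 \<Longrightarrow> (\<lambda>z. f z p) differentiable (at x within {0..})"
    and f_pos: "\<And>x. x \<ge> 0 \<Longrightarrow> f x p > 0"
    and \<delta>_C1: "\<exists>\<delta>'. continuous_on {0..} \<delta>' \<and>
                  (\<forall>x\<ge>0. (\<delta> has_real_derivative \<delta>' x) (at x within {0..}))"
    and \<delta>_nonneg: "\<And>x. x \<ge> 0 \<Longrightarrow> \<delta> x \<ge> 0"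
    and \<delta>_const: "\<exists>t0 ts. 0 \<le> t0 \<and> t0 < ts \<and> (\<forall>x\<in>{0..t0}. \<delta> x = \<delta> 0)
                        \<and> (\<forall>x\<ge>ts. \<delta> x = \<delta> ts)"
    and \<delta>_mono: "mono_on {0..} \<delta>"
    and f_mono: "mono_on {0..} (\<lambda>x. f x p)"
    and t_nonneg: "t \<ge> 0"
  defines "K \<equiv> rbar * c \<alpha> \<alpha>s / (\<alpha> - \<alpha>s)"
    and "S \<equiv> {renov_payoff M F D rbar (\<alpha> - \<alpha>s) (\<lambda>u. f (\<delta> u) p) (c \<alpha> \<alpha>s) t \<theta> | \<theta>. \<theta> \<ge> t}"
    and "Xfin \<equiv> (\<lambda>T. c \<alpha> \<alpha>s * exp (- rbar * (T - t))
                    + (\<alpha> - \<alpha>s) * (LBINT u:{t..T}. f (\<delta> u) p * exp (- rbar * (u - t))))"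
    and "Xinf \<equiv> (\<alpha> - \<alpha>s) * (LBINT u:{t..}. f (\<delta> u) p * exp (- rbar * (u - t)))"
    and "Ct \<equiv> value_C M F D R rbar t"
  shows "(\<exists>Z. is_ess_sup_fam M S Z)
     \<and> ((\<forall>\<theta>\<ge>t. f (\<delta> \<theta>) p - K > 0) \<longrightarrow>
          (\<forall>Z. is_ess_sup_fam M S Z \<longrightarrow> (AE \<omega> in M. R * Z \<omega> = Ct \<omega> - R * Xfin t)))
     \<and> ((\<forall>\<theta>\<ge>t. f (\<delta> \<theta>) p - K < 0) \<longrightarrow>
          (\<forall>Z. is_ess_sup_fam M S Z \<longrightarrow> (AE \<omega> in M. R * Z \<omega> = Ct \<omega> - R * Xinf)))
     \<and> (\<forall>\<theta>s. \<theta>s \<ge> t \<and> f (\<delta> \<theta>s) p = K \<and> (\<forall>\<theta>\<ge>t. f (\<delta> \<theta>) p = K \<longrightarrow> \<theta> = \<theta>s) \<longrightarrow>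
          (\<forall>Z. is_ess_sup_fam M S Z \<longrightarrow> (AE \<omega> in M. R * Z \<omega> = Ct \<omega> - R * Xfin \<theta>s)))"
proof -
  let ?fp = "\<lambda>u. f (\<delta> u) p"
  define a where "a = \<alpha> - \<alpha>s"
  define c0 where "c0 = c \<alpha> \<alpha>s"
  have a_pos: "a > 0" using alpha unfolding a_def by simp
  have c0_pos: "c0 > 0" unfolding c0_def using c_pos alpha by simp
  have K_eq: "K = rbar * c0 / a" unfolding K_def a_def c0_def by simp
  obtain t0 ts where tts: "0 \<le> t0" "t0 < ts" "\<forall>x\<ge>ts. \<delta> x = \<delta> ts" using \<delta>_const by blast
  have fp_mono: "?fp u \<le> ?fp v" if "0 \<le> u" "u \<le> v" for u v
  proof -
    have "\<delta> u \<le> \<delta> v" using mono_onD[OF \<delta>_mono] that by auto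
    then show ?thesis using mono_onD[OF f_mono] that \<delta>_nonneg by auto
  qed
  have fp_bound: "?fp u \<le> ?fp ts" if "0 \<le> u" for u
  proof (cases "u \<le> ts")
    case True then show ?thesis using fp_mono that by blast
  next
    case False then have "ts \<le> u" by simp
    then have "\<delta> u = \<delta> ts" using tts(3) by blast
    then show ?thesis by simp
  qed
  have fp_pos: "0 < ?fp u" if "0 \<le> u" for u using f_pos \<delta>_nonneg that by auto
  obtain \<delta>' where d': "\<forall>x\<ge>0. (\<delta> has_real_derivative \<delta>' x) (at x within {0..})" using \<delta>_C1 by blast
  have \<delta>_cont: "continuous_on {0..} \<delta>"
    unfolding continuous_on_eq_continuous_within by (metis DERIV_continuous atLeast_iff d')
  have f_cont: "continuous_on {0..} (\<lambda>z. f z p)"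
    unfolding continuous_on_eq_continuous_within using f_diff differentiable_imp_continuous_within by auto
  have fp_cont0: "continuous_on {0..} ?fp"
    by (rule continuous_on_compose2[OF f_cont \<delta>_cont]) (use \<delta>_nonneg in auto)
  have fp_cont: "continuous_on {t..} ?fp"
    by (rule continuous_on_subset[OF fp_cont0]) (use t_nonneg in auto)
  have hint_fin: "set_integrable lborel {t..T} (\<lambda>u. ?fp u * exp (- rbar * (u - t)))" for T
  proof -
    have "continuous_on {t..T} (\<lambda>u. ?fp u * exp (- rbar * (u - t)))"
      by (intro continuous_intros continuous_on_subset[OF fp_cont]) auto
    then show ?thesis unfolding set_integrable_def by (intro borel_integrable_compact) auto
  qed
  have hint_inf: "set_integrable lborel {t..} (\<lambda>u. ?fp u * exp (- rbar * (u - t)))"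
    unfolding set_integrable_def
  proof (rule Bochner_Integration.integrable_bound[OF exp_int_lborel[OF r_pos, of t "?fp ts", unfolded set_integrable_def]])
    show "(\<lambda>u. indicat_real {t..} u *\<^sub>R (?fp u * exp (- rbar * (u - t)))) \<in> borel_measurable lborel"
    proof -
      have "continuous_on {t..} (\<lambda>u. ?fp u * exp (- rbar * (u - t)))"
        by (intro continuous_intros fp_cont)
      then show ?thesis unfolding measurable_lborel2
        by (rule borel_measurable_continuous_on_indicator[rotated]) simp
    qed
    show "AE u in lborel. norm (indicat_real {t..} u *\<^sub>R (?fp u * exp (- rbar * (u - t))))
        \<le> norm (indicat_real {t..} u *\<^sub>R (?fp ts * exp (- rbar * (u - t))))"
    proof (rule AE_I2)
      fix u
      show "norm (indicat_real {t..} u *\<^sub>R (?fp u * exp (- rbar * (u - t))))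
        \<le> norm (indicat_real {t..} u *\<^sub>R (?fp ts * exp (- rbar * (u - t))))"
      proof (cases "t \<le> u")
        case True
        then have "0 \<le> u" using t_nonneg by simp
        then show ?thesis using True fp_bound[of u] fp_pos[of u] by (simp add: abs_mult)
      qed simp
    qed
  qed
  interpret prob_space M by (rule prob)
  interpret finite_measure_subalgebra M "F t" by unfold_locales (rule subalg)
  define CE where "CE = real_cond_exp M (F t) (\<lambda>\<omega>. LBINT u:{t..}. exp (- rbar * (u - t)) * D u \<omega>)"
  have CEm: "CE \<in> borel_measurable M" unfolding CE_def by (rule borel_measurable_cond_exp2)
  have Ct_eq: "Ct \<omega> = R * CE \<omega>" for \<omega> unfolding Ct_def value_C_def CE_def by simp
  have Pae: "AE \<omega> in M. renov_payoff M F D rbar (\<alpha> - \<alpha>s) ?fp (c \<alpha> \<alpha>s) t \<theta> \<omega> = CE \<omega> - Xfin \<theta>"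
    if "\<theta> \<ge> t" for \<theta>
    unfolding CE_def Xfin_def
    by (rule payoff_ae[where F=F and t=t, OF prob subalg D_int_path[OF _ t_nonneg] D_int[OF t_nonneg] hint_fin that])
  have key: "(\<exists>Z. is_ess_sup_fam M S Z) \<and> (\<forall>Z. is_ess_sup_fam M S Z \<longrightarrow> (AE \<omega> in M. R * Z \<omega> = Ct \<omega> - R * m))"
    if lb: "\<And>\<theta>. \<theta> \<ge> t \<Longrightarrow> m \<le> Xfin \<theta>" and seq: "\<And>n. \<theta>n n \<ge> t"
      and lim: "(\<lambda>n. Xfin (\<theta>n n)) \<longlonglongrightarrow> m" for m and \<theta>n :: "nat \<Rightarrow> real"
  proof -
    have E: "is_ess_sup_fam M S (\<lambda>\<omega>. CE \<omega> - m) \<and> (\<forall>Z. is_ess_sup_fam M S Z \<longrightarrow> (AE \<omega> in M. Z \<omega> = CE \<omega> - m))"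
      unfolding S_def by (rule ess_sup_char[OF CEm Pae lb seq lim])
    show ?thesis
    proof
      show "\<exists>Z. is_ess_sup_fam M S Z" using E by blast
      show "\<forall>Z. is_ess_sup_fam M S Z \<longrightarrow> (AE \<omega> in M. R * Z \<omega> = Ct \<omega> - R * m)"
      proof (intro allI impI)
        fix Z assume "is_ess_sup_fam M S Z"
        then have "AE \<omega> in M. Z \<omega> = CE \<omega> - m" using E by blast
        then show "AE \<omega> in M. R * Z \<omega> = Ct \<omega> - R * m"
          by eventually_elim (simp add: Ct_eq right_diff_distrib)
      qed
    qed
  qed
  have Xfin_ab: "Xfin \<theta> = c0 * exp (- rbar * (\<theta> - t)) + a * (LBINT u:{t..\<theta>}. ?fp u * exp (- rbar * (u - t)))" for \<theta>
    unfolding Xfin_def a_def c0_def by simp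
  have up: "Xfin \<theta>' \<le> Xfin \<theta>" if "t \<le> \<theta>'" "\<theta>' \<le> \<theta>" "\<And>u. u \<in> {\<theta>'..\<theta>} \<Longrightarrow> K \<le> ?fp u" for \<theta> \<theta>'
    unfolding Xfin_ab by (rule Xfin_up[OF fp_cont that(1,2) a_pos]) (use that(3) K_eq in auto)
  have down: "Xfin \<theta> \<le> Xfin \<theta>'" if "t \<le> \<theta>'" "\<theta>' \<le> \<theta>" "\<And>u. u \<in> {\<theta>'..\<theta>} \<Longrightarrow> ?fp u \<le> K" for \<theta> \<theta>'
    unfolding Xfin_ab by (rule Xfin_down[OF fp_cont that(1,2) a_pos]) (use that(3) K_eq in auto)
  have H_s: "(\<exists>Z. is_ess_sup_fam M S Z) \<and> (\<forall>Z. is_ess_sup_fam M S Z \<longrightarrow> (AE \<omega> in M. R * Z \<omega> = Ct \<omega> - R * Xfin \<theta>s))"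
    if "\<theta>s \<ge> t" "?fp \<theta>s = K" for \<theta>s
  proof (rule key[of "Xfin \<theta>s" "\<lambda>_. \<theta>s"])
    fix \<theta> assume \<theta>: "\<theta> \<ge> t"
    show "Xfin \<theta>s \<le> Xfin \<theta>"
    proof (cases "\<theta>s \<le> \<theta>")
      case True
      show ?thesis
      proof (rule up[OF that(1) True])
        fix u assume "u \<in> {\<theta>s..\<theta>}"
        then show "K \<le> ?fp u" using fp_mono[of \<theta>s u] that t_nonneg by auto
      qed
    next
      case False
      show ?thesis
      proof (rule down[OF \<theta>])
        show "\<theta> \<le> \<theta>s" using False by simp
        fix u assume "u \<in> {\<theta>..\<theta>s}"
        then show "?fp u \<le> K" using fp_mono[of u \<theta>s] that t_nonneg \<theta> by auto
      qed
    qed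
  qed (use that in auto)
  have H_up: "(\<exists>Z. is_ess_sup_fam M S Z) \<and> (\<forall>Z. is_ess_sup_fam M S Z \<longrightarrow> (AE \<omega> in M. R * Z \<omega> = Ct \<omega> - R * Xfin t))"
    if "\<forall>\<theta>\<ge>t. K \<le> ?fp \<theta>"
  proof (rule key[of "Xfin t" "\<lambda>_. t"])
    fix \<theta> assume \<theta>: "\<theta> \<ge> t"
    show "Xfin t \<le> Xfin \<theta>" by (rule up[OF order.refl \<theta>]) (use that in auto)
  qed auto
  have Xlim: "(\<lambda>n. Xfin (\<theta> + real n)) \<longlonglongrightarrow> Xinf" for \<theta>
  proof -
    have "(\<lambda>n. c0 * exp (- rbar * (\<theta> + real n - t)) + a * (LBINT u:{t..\<theta> + real n}. ?fp u * exp (- rbar * (u - t))))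
       \<longlonglongrightarrow> c0 * 0 + a * (LBINT u:{t..}. ?fp u * exp (- rbar * (u - t)))"
      by (intro tendsto_intros exp_lim[OF r_pos] lim_int[OF hint_inf])
    then show ?thesis unfolding Xfin_ab Xinf_def a_def by simp
  qed
  have H_inf: "(\<exists>Z. is_ess_sup_fam M S Z) \<and> (\<forall>Z. is_ess_sup_fam M S Z \<longrightarrow> (AE \<omega> in M. R * Z \<omega> = Ct \<omega> - R * Xinf))"
    if "\<forall>\<theta>\<ge>t. ?fp \<theta> \<le> K"
  proof (rule key[of Xinf "\<lambda>n. t + real n"])
    fix \<theta> assume \<theta>: "\<theta> \<ge> t"
    show "Xinf \<le> Xfin \<theta>"
    proof (rule LIMSEQ_le_const2[OF Xlim[of \<theta>]])
      show "\<exists>N. \<forall>n\<ge>N. Xfin (\<theta> + real n) \<le> Xfin \<theta>"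
        by (intro exI allI impI down[OF \<theta>]) (use that \<theta> in auto)
    qed
  qed (use Xlim[of t] in auto)
  have part1: "\<exists>Z. is_ess_sup_fam M S Z"
  proof (cases "K \<le> ?fp t")
    case True
    then have "\<forall>\<theta>\<ge>t. K \<le> ?fp \<theta>" using fp_mono t_nonneg by (meson order.trans)
    then show ?thesis using H_up by blast
  next
    case False
    show ?thesis
    proof (cases "\<exists>\<theta>\<ge>t. K \<le> ?fp \<theta>")
      case True
      then obtain \<theta> where \<theta>: "\<theta> \<ge> t" "K \<le> ?fp \<theta>" by blast
      have "continuous_on {t..\<theta>} ?fp" by (rule continuous_on_subset[OF fp_cont]) auto
      then obtain \<theta>s where "t \<le> \<theta>s" "\<theta>s \<le> \<theta>" "?fp \<theta>s = K"
        using IVT'[of ?fp t K \<theta>] False \<theta> by auto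
      then show ?thesis using H_s by blast
    next
      case False
      then have "\<forall>\<theta>\<ge>t. ?fp \<theta> \<le> K" by auto
      then show ?thesis using H_inf by blast
    qed
  qed
  show ?thesis
  proof (intro conjI impI allI)
    show "\<exists>Z. is_ess_sup_fam M S Z" by (rule part1)
  next
    fix Z assume "\<forall>\<theta>\<ge>t. 0 < f (\<delta> \<theta>) p - K" "is_ess_sup_fam M S Z"
    then show "AE \<omega> in M. R * Z \<omega> = Ct \<omega> - R * Xfin t" using H_up by force
  next
    fix Z assume "\<forall>\<theta>\<ge>t. f (\<delta> \<theta>) p - K < 0" "is_ess_sup_fam M S Z"
    then show "AE \<omega> in M. R * Z \<omega> = Ct \<omega> - R * Xinf" using H_inf by force
  next
    fix \<theta>s Z assume "t \<le> \<theta>s \<and> f (\<delta> \<theta>s) p = K \<and> (\<forall>\<theta>\<ge>t. f (\<delta> \<theta>) p = K \<longrightarrow> \<theta> = \<theta>s)"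
      "is_ess_sup_fam M S Z"
    then show "AE \<omega> in M. R * Z \<omega> = Ct \<omega> - R * Xfin \<theta>s" using H_s by blast
  qed
qed

end
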